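(* The constant $2$ in the Lipschitz estimate $h(W_1^\circ,W_2^\circ)\le 2h(W_1,W_2)$ for $\bigcirc:\mathcal{H}^\circ(S^n)\to\mathcal{H}^\circ(S^n)$ is optimal: for every real $r$ with $1<r<2$ there exist $W_1,W_2\in\mathcal{H}^\circ(S^n)$ (e.g. $W_i=H(P_i)$ for suitable $P_1,P_2\in S^n$) such that $r\,h(W_1,W_2)<h(W_1^\circ,W_2^\circ)$.
   Context: $S^n$ is the unit sphere in $\mathbb{R}^{n+1}$, $n\ge1$; $|PQ|=\arccos(P\cdot Q)$. $H(P)=\{Q\in S^n:P\cdot Q\ge0\}$ and $W^\circ=\bigcap_{P\in W}H(P)$. $\mathcal{H}(S^n)$ is the set of non-empty closed subsets of $S^n$ with the Pompeiu-Hausdorff metric $h(A,B)=\max\{\max_{x\in A}\min_{y\in B}|xy|,\ \max_{y\in B}\min_{x\in A}|xy|\}$, and $\mathcal{H}^\circ(S^n)=\{W\in\mathcal{H}(S^n):W^\circ\ne\emptyset\}$. *)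

theory Defs
  imports "HOL-Analysis.Analysis"
begin

text \<open>The unit sphere S^n in a Euclidean space of dimension n+1 is sphere 0 1.
  Spherical (geodesic) distance |PQ| = arccos (P . Q).\<close>
definition sdist :: "'a::euclidean_space \<Rightarrow> 'a \<Rightarrow> real" where
  "sdist P Q = arccos (P \<bullet> Q)"

definition hemi :: "'a::euclidean_space \<Rightarrow> 'a set" where
  "hemi P = {Q \<in> sphere 0 1. P \<bullet> Q \<ge> 0}"

definition polar :: "'a::euclidean_space set \<Rightarrow> 'a set" where
  "polar W = sphere 0 1 \<inter> (\<Inter>P\<in>W. hemi P)"

text \<open>Pompeiu-Hausdorff distance w.r.t. the spherical metric. For non-empty compact
  sets the sup/inf below are attained, so they coincide with the max/min of the paper.\<close>
definition hdist :: "'a::euclidean_space set \<Rightarrow> 'a set \<Rightarrow> real" where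
  "hdist A B = max (SUP x\<in>A. INF y\<in>B. sdist x y) (SUP y\<in>B. INF x\<in>A. sdist x y)"

definition HS :: "'a::euclidean_space set set" where
  "HS = {W. W \<subseteq> sphere 0 1 \<and> W \<noteq> {} \<and> closed W}"

definition HSo :: "'a::euclidean_space set set" where
  "HSo = {W \<in> HS. polar W \<noteq> {}}"

end

theory Submission
  imports Defs
begin

lemma inner_unit_bound:
  fixes x y :: "'a::euclidean_space"
  assumes "norm x = 1" "norm y = 1"
  shows "-1 \<le> x \<bullet> y" "x \<bullet> y \<le> 1"
  using Cauchy_Schwarz_ineq2[of x y] assms by auto

theorem claim1:
  fixes r :: real
  assumes "DIM('a::euclidean_space) \<ge> 2"
    and "1 < r" and "r < 2"
  shows "\<exists>W1 W2 :: 'a set. W1 \<in> HSo \<and> W2 \<in> HSo \<and>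
           r * hdist W1 W2 < hdist (polar W1) (polar W2)"
proof -
  obtain u v :: 'a where uv: "u \<in> Basis" "v \<in> Basis" "u \<noteq> v"
  proof -
    have "\<not> (\<forall>u\<in>Basis. \<forall>v\<in>(Basis::'a set). u = v)"
    proof
      assume "\<forall>u\<in>Basis. \<forall>v\<in>(Basis::'a set). u = v"
      then have "card (Basis::'a set) \<le> 1" using card_le_Suc0_iff_eq[OF finite_Basis[where 'a='a]] by simp
      with assms(1) show False by simp
    qed
    then show ?thesis using that by blast
  qed
  have nu: "norm u = 1" and nv: "norm v = 1" using uv by auto
  have uu: "u \<bullet> u = 1" and vv: "v \<bullet> v = 1" using uv by auto
  have uvz: "u \<bullet> v = 0" "v \<bullet> u = 0" using uv by (auto simp: inner_not_same_Basis)
  define w where "w = (1 / sqrt 2) *\<^sub>R (v - u)"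
  have ww: "w \<bullet> w = 1"
    by (simp add: w_def inner_diff_left inner_diff_right uu vv uvz power2_eq_square[symmetric])
  have nw: "norm w = 1" using ww by (simp add: norm_eq_sqrt_inner)
  have wu: "w \<bullet> (-u) = 1 / sqrt 2" "(-u) \<bullet> w = 1 / sqrt 2"
    by (simp_all add: w_def inner_diff_left inner_diff_right uu vv uvz)
  have wv: "w \<bullet> v = 1 / sqrt 2"
    by (simp add: w_def inner_diff_left inner_diff_right uu vv uvz)
  have wuu: "w \<bullet> u = - (1 / sqrt 2)" "u \<bullet> w = - (1 / sqrt 2)"
    by (simp_all add: w_def inner_diff_left inner_diff_right uu vv uvz)
  define W1 where "W1 = {u, w}"
  define W2 where "W2 = {u, -u}"
  have vP1: "v \<in> polar W1"
    by (simp add: polar_def hemi_def W1_def nv uvz wv)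
  have vP2: "-v \<in> polar W2"
    by (simp add: polar_def hemi_def W2_def nv uvz)
  have H1: "W1 \<in> HSo" using vP1 nu nw
    by (auto simp: HSo_def HS_def W1_def intro: finite_imp_closed)
  have H2: "W2 \<in> HSo" using vP2 nu
    by (auto simp: HSo_def HS_def W2_def intro: finite_imp_closed)
  have s1: "sdist u u = 0" by (simp add: sdist_def uu)
  have s2: "sdist w (-u) = pi/4" "sdist (-u) w = pi/4"
    unfolding sdist_def wu by (simp_all add: arccos_one_over_sqrt_2)
  have A: "(SUP x\<in>W1. INF y\<in>W2. sdist x y) \<le> pi/4"
  proof (rule cSUP_least)
    show "W1 \<noteq> {}" by (simp add: W1_def)
  next
    fix x assume "x \<in> W1"
    then have "x = u \<or> x = w" by (simp add: W1_def)
    then show "(INF y\<in>W2. sdist x y) \<le> pi/4"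
    proof
      assume "x = u"
      have "(INF y\<in>W2. sdist x y) \<le> sdist x u"
        by (rule cINF_lower) (auto simp: W2_def)
      then show ?thesis using s1 \<open>x = u\<close> pi_gt_zero by (metis (no_types) order_trans less_imp_le divide_pos_pos zero_less_numeral)
    next
      assume "x = w"
      have "(INF y\<in>W2. sdist x y) \<le> sdist x (-u)"
        by (rule cINF_lower) (auto simp: W2_def)
      then show ?thesis using s2 \<open>x = w\<close> by simp
    qed
  qed
  have B: "(SUP y\<in>W2. INF x\<in>W1. sdist x y) \<le> pi/4"
  proof (rule cSUP_least)
    show "W2 \<noteq> {}" by (simp add: W2_def)
  next
    fix y assume "y \<in> W2"
    then have "y = u \<or> y = -u" by (simp add: W2_def)
    then show "(INF x\<in>W1. sdist x y) \<le> pi/4"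
    proof
      assume "y = u"
      have "(INF x\<in>W1. sdist x y) \<le> sdist u y"
        by (rule cINF_lower) (auto simp: W1_def)
      then show ?thesis using s1 \<open>y = u\<close> pi_gt_zero by (metis (no_types) order_trans less_imp_le divide_pos_pos zero_less_numeral)
    next
      assume "y = -u"
      have "(INF x\<in>W1. sdist x y) \<le> sdist w y"
        by (rule cINF_lower) (auto simp: W1_def)
      then show ?thesis using s2 \<open>y = -u\<close> by simp
    qed
  qed
  have hW: "hdist W1 W2 \<le> pi/4" using A B by (simp add: hdist_def)
  have sph: "\<And>x. x \<in> polar W \<Longrightarrow> norm x = 1" for W :: "'a set"
    by (simp add: polar_def)
  have C: "pi/2 \<le> (INF x\<in>polar W1. sdist x (-v))"
  proof (rule cINF_greatest)
    show "polar W1 \<noteq> {}" using vP1 by auto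
  next
    fix x assume x: "x \<in> polar W1"
    then have nx: "norm x = 1" by (rule sph)
    have "u \<bullet> x \<ge> 0" "w \<bullet> x \<ge> 0" using x by (auto simp: polar_def hemi_def W1_def)
    then have "v \<bullet> x \<ge> 0"
      by (simp add: w_def inner_diff_left field_simps)
    then have "x \<bullet> (-v) \<le> 0" by (simp add: inner_commute)
    moreover have "-1 \<le> x \<bullet> (-v)" using inner_unit_bound[of x "-v"] nx nv by simp
    ultimately have "arccos 0 \<le> arccos (x \<bullet> (-v))"
      by (intro arccos_le_arccos) auto
    then show "pi/2 \<le> sdist x (-v)" by (simp add: sdist_def)
  qed
  have bdd: "bdd_above ((\<lambda>y. INF x\<in>polar W1. sdist x y) ` polar W2)"
  proof (rule bdd_aboveI2)
    fix y assume y: "y \<in> polar W2"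
    have "(INF x\<in>polar W1. sdist x y) \<le> sdist v y"
    proof (rule cINF_lower)
      show "v \<in> polar W1" using vP1 .
      show "bdd_below ((\<lambda>x. sdist x y) ` polar W1)"
      proof (rule bdd_belowI2)
        fix x assume "x \<in> polar W1"
        then show "0 \<le> sdist x y" unfolding sdist_def
          using inner_unit_bound[of x y] sph[OF y] sph by (intro arccos_lbound) auto
      qed
    qed
    also have "\<dots> \<le> pi" unfolding sdist_def
      using inner_unit_bound[of v y] nv sph[OF y] by (intro arccos_ubound) auto
    finally show "(INF x\<in>polar W1. sdist x y) \<le> pi" .
  qed
  have "(INF x\<in>polar W1. sdist x (-v)) \<le> (SUP y\<in>polar W2. INF x\<in>polar W1. sdist x y)"
    by (rule cSUP_upper[OF vP2 bdd])
  then have hP: "pi/2 \<le> hdist (polar W1) (polar W2)"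
    using C by (simp add: hdist_def)
  have "r * hdist W1 W2 \<le> r * (pi/4)"
    using hW assms(2) by (intro mult_left_mono) auto
  also have "\<dots> < 2 * (pi/4)" using assms(3) pi_gt_zero by (intro mult_strict_right_mono) auto
  also have "\<dots> = pi/2" by simp
  finally show ?thesis using hP H1 H2 by (intro exI[of _ W1] exI[of _ W2]) auto
qed

end
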